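(* Neither of the real simple Lie algebras $so(3)$ and $sl(2,\mathbb R)$ admits a realization as a Lie algebra of Lie point symmetry generators of an equation $u_{tx}=g(t,x)u_x+f(t,x,u)$ with $g_x\neq0$, $f_{uu}\neq0$; that is, there are no three vector fields of the form $\tau(t)\partial_t+\xi(x)\partial_x+[h(t)u+r(t,x)]\partial_u$ that are symmetries of such an equation and satisfy the commutation relations of $so(3)$ or of $sl(2,\mathbb R)$.
   Context: Lie point symmetry generators of equations $u_{tx}=g(t,x)u_x+f(t,x,u)$ ($g_x\neq0$, $f_{uu}\neq0$) are vector fields of the form $\tau(t)\partial_t+\xi(x)\partial_x+[h(t)u+r(t,x)]\partial_u$. All functions are smooth and considerations are local. *)

theory Defs
  imports "HOL-Analysis.Analysis"
begin

type_synonym fn3 = "real \<Rightarrow> real \<Rightarrow> real \<Rightarrow> real"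

text \<open>A vector field tau d/dt + xi d/dx + eta d/du, given by its components (tau, xi, eta).\<close>
type_synonym vfield = "fn3 \<times> fn3 \<times> fn3"

definition Dt :: "fn3 \<Rightarrow> fn3" where
  "Dt F = (\<lambda>t x u. deriv (\<lambda>s. F s x u) t)"
definition Dx :: "fn3 \<Rightarrow> fn3" where
  "Dx F = (\<lambda>t x u. deriv (\<lambda>y. F t y u) x)"
definition Du :: "fn3 \<Rightarrow> fn3" where
  "Du F = (\<lambda>t x u. deriv (\<lambda>v. F t x v) u)"

definition pdir :: "nat \<Rightarrow> fn3 \<Rightarrow> fn3" where
  "pdir k F = (if k = 0 then Dt F else if k = 1 then Dx F else Du F)"

text \<open>Smoothness (C-infinity) on I x J x U: all iterated partial derivatives exist
  and are continuous.\<close>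
definition smooth3 :: "real set \<Rightarrow> real set \<Rightarrow> real set \<Rightarrow> fn3 \<Rightarrow> bool" where
  "smooth3 I J U F \<longleftrightarrow> (\<forall>ks. let H = fold pdir ks F in
      continuous_on (I \<times> J \<times> U) (\<lambda>(t, x, u). H t x u) \<and>
      (\<forall>t\<in>I. \<forall>x\<in>J. \<forall>u\<in>U.
         (\<lambda>s. H s x u) differentiable (at t) \<and>
         (\<lambda>y. H t y u) differentiable (at x) \<and>
         (\<lambda>v. H t x v) differentiable (at u)))"

definition vtau :: "vfield \<Rightarrow> fn3" where "vtau Q = fst Q"
definition vxi :: "vfield \<Rightarrow> fn3" where "vxi Q = fst (snd Q)"
definition veta :: "vfield \<Rightarrow> fn3" where "veta Q = snd (snd Q)"

definition vapp :: "vfield \<Rightarrow> fn3 \<Rightarrow> fn3" where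
  "vapp Q F = (\<lambda>t x u. vtau Q t x u * Dt F t x u + vxi Q t x u * Dx F t x u
                        + veta Q t x u * Du F t x u)"

definition lie_bracket :: "vfield \<Rightarrow> vfield \<Rightarrow> vfield" where
  "lie_bracket P Q =
     ((\<lambda>t x u. vapp P (vtau Q) t x u - vapp Q (vtau P) t x u),
      (\<lambda>t x u. vapp P (vxi Q) t x u - vapp Q (vxi P) t x u),
      (\<lambda>t x u. vapp P (veta Q) t x u - vapp Q (veta P) t x u))"

definition vlin3 :: "real \<Rightarrow> vfield \<Rightarrow> real \<Rightarrow> vfield \<Rightarrow> real \<Rightarrow> vfield \<Rightarrow> vfield" where
  "vlin3 a P b Q c R =
     ((\<lambda>t x u. a * vtau P t x u + b * vtau Q t x u + c * vtau R t x u),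
      (\<lambda>t x u. a * vxi P t x u + b * vxi Q t x u + c * vxi R t x u),
      (\<lambda>t x u. a * veta P t x u + b * veta Q t x u + c * veta R t x u))"

definition vscale :: "real \<Rightarrow> vfield \<Rightarrow> vfield" where
  "vscale a P = ((\<lambda>t x u. a * vtau P t x u), (\<lambda>t x u. a * vxi P t x u),
                 (\<lambda>t x u. a * veta P t x u))"

definition vzero :: vfield where
  "vzero = ((\<lambda>t x u. 0), (\<lambda>t x u. 0), (\<lambda>t x u. 0))"

definition vf_eq_on :: "real set \<Rightarrow> real set \<Rightarrow> real set \<Rightarrow> vfield \<Rightarrow> vfield \<Rightarrow> bool" where
  "vf_eq_on I J U P Q \<longleftrightarrow> (\<forall>t\<in>I. \<forall>x\<in>J. \<forall>u\<in>U.
      vtau P t x u = vtau Q t x u \<and> vxi P t x u = vxi Q t x u \<and> veta P t x u = veta Q t x u)"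

definition lin_indep3 :: "real set \<Rightarrow> real set \<Rightarrow> real set \<Rightarrow> vfield \<Rightarrow> vfield \<Rightarrow> vfield \<Rightarrow> bool" where
  "lin_indep3 I J U P Q R \<longleftrightarrow>
     (\<forall>a b c. vf_eq_on I J U (vlin3 a P b Q c R) vzero \<longrightarrow> a = 0 \<and> b = 0 \<and> c = 0)"

text \<open>Coefficients of the second prolongation (standard formulas
  eta^t = D_t eta - u_t D_t tau - u_x D_t xi, eta^x = D_x eta - u_t D_x tau - u_x D_x xi,
  eta^{tx} = D_x eta^t - u_tt D_x tau - u_tx D_x xi, with D_t, D_x total derivatives),
  written out at the jet point (t,x,u,u_t,u_x,u_tt,u_tx,u_xx).\<close>
definition eta_t :: "vfield \<Rightarrow> real \<Rightarrow> real \<Rightarrow> real \<Rightarrow> real \<Rightarrow> real \<Rightarrow> real" where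
  "eta_t Q t x u ut ux =
     Dt (veta Q) t x u + ut * Du (veta Q) t x u
     - ut * (Dt (vtau Q) t x u + ut * Du (vtau Q) t x u)
     - ux * (Dt (vxi Q) t x u + ut * Du (vxi Q) t x u)"

definition eta_x :: "vfield \<Rightarrow> real \<Rightarrow> real \<Rightarrow> real \<Rightarrow> real \<Rightarrow> real \<Rightarrow> real" where
  "eta_x Q t x u ut ux =
     Dx (veta Q) t x u + ux * Du (veta Q) t x u
     - ut * (Dx (vtau Q) t x u + ux * Du (vtau Q) t x u)
     - ux * (Dx (vxi Q) t x u + ux * Du (vxi Q) t x u)"

definition eta_tx :: "vfield \<Rightarrow> real \<Rightarrow> real \<Rightarrow> real \<Rightarrow> real \<Rightarrow> real \<Rightarrow> real \<Rightarrow> real \<Rightarrow> real \<Rightarrow> real" where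
  "eta_tx Q t x u ut ux utt utx uxx =
     (let \<tau> = vtau Q; \<xi> = vxi Q; \<eta> = veta Q;
          dx_part = Dx (Dt \<eta>) t x u + ut * Dx (Du \<eta>) t x u
                    - ut * (Dx (Dt \<tau>) t x u + ut * Dx (Du \<tau>) t x u)
                    - ux * (Dx (Dt \<xi>) t x u + ut * Dx (Du \<xi>) t x u);
          du_part = Du (Dt \<eta>) t x u + ut * Du (Du \<eta>) t x u
                    - ut * (Du (Dt \<tau>) t x u + ut * Du (Du \<tau>) t x u)
                    - ux * (Du (Dt \<xi>) t x u + ut * Du (Du \<xi>) t x u);
          dut_part = Du \<eta> t x u - Dt \<tau> t x u - 2 * ut * Du \<tau> t x u - ux * Du \<xi> t x u;
          dux_part = - (Dt \<xi> t x u + ut * Du \<xi> t x u)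
      in dx_part + ux * du_part + utx * dut_part + uxx * dux_part
         - utt * (Dx \<tau> t x u + ux * Du \<tau> t x u)
         - utx * (Dx \<xi> t x u + ux * Du \<xi> t x u))"

text \<open>Q is a Lie point symmetry of u_tx = g(t,x) u_x + f(t,x,u) on I x J x U
  (infinitesimal invariance criterion: pr^(2) Q (Delta) = 0 whenever Delta = 0,
   Delta = u_tx - g u_x - f).\<close>
definition is_symmetry :: "real set \<Rightarrow> real set \<Rightarrow> real set \<Rightarrow> (real \<Rightarrow> real \<Rightarrow> real) \<Rightarrow> fn3 \<Rightarrow> vfield \<Rightarrow> bool" where
  "is_symmetry I J U g f Q \<longleftrightarrow>
     (\<forall>t\<in>I. \<forall>x\<in>J. \<forall>u\<in>U. \<forall>ut ux utt utx uxx.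
        utx = g t x * ux + f t x u \<longrightarrow>
        eta_tx Q t x u ut ux utt utx uxx
        - vapp Q (\<lambda>t x u. g t x) t x u * ux
        - g t x * eta_x Q t x u ut ux
        - vapp Q f t x u = 0)"

definition admissible_field :: "real set \<Rightarrow> real set \<Rightarrow> real set \<Rightarrow> vfield \<Rightarrow> bool" where
  "admissible_field I J U Q \<longleftrightarrow>
     smooth3 I J U (vtau Q) \<and> smooth3 I J U (vxi Q) \<and> smooth3 I J U (veta Q) \<and>
     (\<exists>\<tau>0 \<xi>0 h r. \<forall>t\<in>I. \<forall>x\<in>J. \<forall>u\<in>U.
        vtau Q t x u = \<tau>0 t \<and> vxi Q t x u = \<xi>0 x \<and> veta Q t x u = h t * u + r t x)"

definition so3_relations :: "real set \<Rightarrow> real set \<Rightarrow> real set \<Rightarrow> vfield \<Rightarrow> vfield \<Rightarrow> vfield \<Rightarrow> bool" where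
  "so3_relations I J U P Q R \<longleftrightarrow>
     vf_eq_on I J U (lie_bracket P Q) R \<and>
     vf_eq_on I J U (lie_bracket Q R) P \<and>
     vf_eq_on I J U (lie_bracket R P) Q"

definition sl2_relations :: "real set \<Rightarrow> real set \<Rightarrow> real set \<Rightarrow> vfield \<Rightarrow> vfield \<Rightarrow> vfield \<Rightarrow> bool" where
  "sl2_relations I J U P Q R \<longleftrightarrow>
     vf_eq_on I J U (lie_bracket P Q) P \<and>
     vf_eq_on I J U (lie_bracket Q R) R \<and>
     vf_eq_on I J U (lie_bracket P R) (vscale 2 Q)"

end

theory Submission
  imports Defs
begin


lemma deriv_local:
  assumes "open S" "x \<in> S" "\<forall>y\<in>S. f y = g y"
  shows "deriv f x = deriv g x"
proof -
  have "\<And>D. DERIV f x :> D \<longleftrightarrow> DERIV g x :> D"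
    using assms has_field_derivative_transform_within_open[of f _ x S g]
      has_field_derivative_transform_within_open[of g _ x S f] by auto
  then show ?thesis unfolding deriv_def by simp
qed

lemma deriv_add_const: "deriv (\<lambda>y. c + f y) x = deriv f x"
proof -
  have "\<And>D. DERIV (\<lambda>y. c + f y) x :> D \<longleftrightarrow> DERIV f x :> D"
  proof
    fix D assume "DERIV (\<lambda>y. c + f y) x :> D"
    from DERIV_add[OF this DERIV_const[of "-c"]] show "DERIV f x :> D" by simp
  next
    fix D assume "DERIV f x :> D"
    from DERIV_add[OF DERIV_const[of c] this] show "DERIV (\<lambda>y. c + f y) x :> D" by simp
  qed
  then show ?thesis unfolding deriv_def by simp
qed

lemma deriv_zero_const:
  assumes "(F has_real_derivative D) (at x)" "open S" "x \<in> S" "\<forall>y\<in>S. F y = c"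
  shows "D = 0"
proof -
  have "((\<lambda>y. c) has_real_derivative 0) (at x)" by simp
  then have "(F has_real_derivative 0) (at x)"
    using assms by (intro has_field_derivative_transform_within_open[of "\<lambda>y. c" 0 x S F]) auto
  then show ?thesis using assms(1) DERIV_unique by blast
qed

lemma Dt_loc: "open I \<Longrightarrow> t \<in> I \<Longrightarrow> \<forall>s\<in>I. F s x u = \<phi> s \<Longrightarrow> Dt F t x u = deriv \<phi> t"
  unfolding Dt_def by (rule deriv_local) auto
lemma Dx_loc: "open J \<Longrightarrow> x \<in> J \<Longrightarrow> \<forall>y\<in>J. F t y u = \<phi> y \<Longrightarrow> Dx F t x u = deriv \<phi> x"
  unfolding Dx_def by (rule deriv_local) auto
lemma Du_loc: "open U \<Longrightarrow> u \<in> U \<Longrightarrow> \<forall>v\<in>U. F t x v = \<phi> v \<Longrightarrow> Du F t x u = deriv \<phi> u"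
  unfolding Du_def by (rule deriv_local) auto

lemma smooth3_D:
  assumes "smooth3 I J U F" "t \<in> I" "x \<in> J" "u \<in> U"
  shows "((\<lambda>s. fold pdir ks F s x u) has_real_derivative Dt (fold pdir ks F) t x u) (at t)"
    "((\<lambda>y. fold pdir ks F t y u) has_real_derivative Dx (fold pdir ks F) t x u) (at x)"
    "((\<lambda>v. fold pdir ks F t x v) has_real_derivative Du (fold pdir ks F) t x u) (at u)"
  using assms unfolding smooth3_def Let_def Dt_def Dx_def Du_def
  by (auto simp: DERIV_deriv_iff_real_differentiable)

lemma fold0: "fold pdir [] F = F" and fold1: "fold pdir [0] F = Dt F" "fold pdir [1] F = Dx F"
  "fold pdir [2] F = Du F"
  by (auto simp: pdir_def)

lemma smooth3_D0:
  assumes "smooth3 I J U F" "t \<in> I" "x \<in> J" "u \<in> U"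
  shows "((\<lambda>s. F s x u) has_real_derivative Dt F t x u) (at t)"
    "((\<lambda>y. F t y u) has_real_derivative Dx F t x u) (at x)"
    "((\<lambda>v. F t x v) has_real_derivative Du F t x u) (at u)"
  using smooth3_D[OF assms, of "[]"] by (auto simp: fold0)

lemma smooth3_Dt:
  assumes "smooth3 I J U F" "t \<in> I" "x \<in> J" "u \<in> U"
  shows "((\<lambda>y. Dt F t y u) has_real_derivative Dx (Dt F) t x u) (at x)"
    "((\<lambda>v. Dt F t x v) has_real_derivative Du (Dt F) t x u) (at u)"
  using smooth3_D[OF assms, of "[0]"] by (auto simp: pdir_def)

lemma smooth3_Dx:
  assumes "smooth3 I J U F" "t \<in> I" "x \<in> J" "u \<in> U"
  shows "((\<lambda>y. Dx F t y u) has_real_derivative Dx (Dx F) t x u) (at x)"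
    "((\<lambda>v. Dx F t x v) has_real_derivative Du (Dx F) t x u) (at u)"
  using smooth3_D[OF assms, of "[1]"] by (auto simp: pdir_def)

lemma smooth3_Du:
  assumes "smooth3 I J U F" "t \<in> I" "x \<in> J" "u \<in> U"
  shows "((\<lambda>s. Du F s x u) has_real_derivative Dt (Du F) t x u) (at t)"
    "((\<lambda>v. Du F t x v) has_real_derivative Du (Du F) t x u) (at u)"
  using smooth3_D[OF assms, of "[2]"] by (auto simp: pdir_def)


definition FF where "FF I J U Q \<tau>0 \<tau>1 \<xi>0 \<xi>1 h0 h1 r0 rt rx rtx \<longleftrightarrow>
 (\<forall>t\<in>I. (\<tau>0 has_real_derivative \<tau>1 t) (at t)) \<and> (\<forall>x\<in>J. (\<xi>0 has_real_derivative \<xi>1 x) (at x)) \<and>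
 (\<forall>t\<in>I. (h0 has_real_derivative h1 t) (at t)) \<and>
 (\<forall>t\<in>I. \<forall>x\<in>J. \<forall>u\<in>U. vtau Q t x u = \<tau>0 t \<and> Dt (vtau Q) t x u = \<tau>1 t \<and> Dx (vtau Q) t x u = 0
   \<and> Du (vtau Q) t x u = 0 \<and> Dx (Dt (vtau Q)) t x u = 0 \<and> Du (Dt (vtau Q)) t x u = 0
   \<and> Dx (Du (vtau Q)) t x u = 0 \<and> Du (Du (vtau Q)) t x u = 0 \<and>
   vxi Q t x u = \<xi>0 x \<and> Dx (vxi Q) t x u = \<xi>1 x \<and> Dt (vxi Q) t x u = 0 \<and> Du (vxi Q) t x u = 0
   \<and> Dx (Dt (vxi Q)) t x u = 0 \<and> Du (Dt (vxi Q)) t x u = 0 \<and> Du (Du (vxi Q)) t x u = 0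
   \<and> Dx (Du (vxi Q)) t x u = 0 \<and>
   veta Q t x u = h0 t * u + r0 t x \<and> Du (veta Q) t x u = h0 t \<and> Dt (veta Q) t x u = h1 t * u + rt t x
   \<and> Dx (veta Q) t x u = rx t x \<and> Du (Du (veta Q)) t x u = 0 \<and> Du (Dt (veta Q)) t x u = h1 t
   \<and> Dx (Du (veta Q)) t x u = 0 \<and> Dx (Dt (veta Q)) t x u = rtx t x)"

lemma field_facts:
  assumes oI: "open I" and oJ: "open J" and oU: "open U"
    and nI: "I \<noteq> {}" and nJ: "J \<noteq> {}" and nU: "U \<noteq> {}"
    and adm: "admissible_field I J U Q"
  shows "\<exists>\<tau>0 \<tau>1 \<xi>0 \<xi>1 h0 h1 r0 rt rx rtx. FF I J U Q \<tau>0 \<tau>1 \<xi>0 \<xi>1 h0 h1 r0 rt rx rtx"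
proof -
  from adm obtain \<tau>0 \<xi>0 h0 r0 where
    sm: "smooth3 I J U (vtau Q)" "smooth3 I J U (vxi Q)" "smooth3 I J U (veta Q)" and
    eq: "\<forall>t\<in>I. \<forall>x\<in>J. \<forall>u\<in>U. vtau Q t x u = \<tau>0 t \<and> vxi Q t x u = \<xi>0 x \<and> veta Q t x u = h0 t * u + r0 t x"
    unfolding admissible_field_def by blast
  obtain t0 x0 u0 where t0: "t0 \<in> I" and x0: "x0 \<in> J" and u0: "u0 \<in> U" using nI nJ nU by blast
  define \<tau>1 where "\<tau>1 = deriv \<tau>0"
  define \<xi>1 where "\<xi>1 = deriv \<xi>0"
  define h1 where "h1 = deriv h0"
  define rt where "rt = (\<lambda>t x. deriv (\<lambda>s. r0 s x) t)"
  define rx where "rx = (\<lambda>t x. deriv (\<lambda>y. r0 t y) x)"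
  define rtx where "rtx = (\<lambda>t x. deriv (\<lambda>y. rt t y) x)"
  have d\<tau>: "(\<tau>0 has_real_derivative \<tau>1 t) (at t)" if "t \<in> I" for t
  proof -
    have "((\<lambda>s. vtau Q s x0 u0) has_real_derivative Dt (vtau Q) t x0 u0) (at t)"
      using smooth3_D0[OF sm(1) that x0 u0] by simp
    then have "(\<tau>0 has_real_derivative Dt (vtau Q) t x0 u0) (at t)"
      by (rule has_field_derivative_transform_within_open[OF _ oI that]) (use eq x0 u0 in auto)
    then show ?thesis unfolding \<tau>1_def by (simp add: DERIV_imp_deriv)
  qed
  have d\<xi>: "(\<xi>0 has_real_derivative \<xi>1 x) (at x)" if "x \<in> J" for x
  proof -
    have "((\<lambda>y. vxi Q t0 y u0) has_real_derivative Dx (vxi Q) t0 x u0) (at x)"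
      using smooth3_D0[OF sm(2) t0 that u0] by simp
    then have "(\<xi>0 has_real_derivative Dx (vxi Q) t0 x u0) (at x)"
      by (rule has_field_derivative_transform_within_open[OF _ oJ that]) (use eq t0 u0 in auto)
    then show ?thesis unfolding \<xi>1_def by (simp add: DERIV_imp_deriv)
  qed
  have Du\<eta>: "Du (veta Q) t x u = h0 t" if "t \<in> I" "x \<in> J" "u \<in> U" for t x u
  proof -
    have "Du (veta Q) t x u = deriv (\<lambda>v. h0 t * v + r0 t x) u"
      by (rule Du_loc[OF oU that(3)]) (use eq that in auto)
    also have "\<dots> = h0 t"
      by (rule DERIV_imp_deriv) (auto intro!: derivative_eq_intros)
    finally show ?thesis .
  qed
  have dh: "(h0 has_real_derivative h1 t) (at t)" if "t \<in> I" for t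
  proof -
    have "((\<lambda>s. Du (veta Q) s x0 u0) has_real_derivative Dt (Du (veta Q)) t x0 u0) (at t)"
      using smooth3_Du[OF sm(3) that x0 u0] by simp
    then have "(h0 has_real_derivative Dt (Du (veta Q)) t x0 u0) (at t)"
      by (rule has_field_derivative_transform_within_open[OF _ oI that]) (use Du\<eta> x0 u0 in auto)
    then show ?thesis unfolding h1_def by (simp add: DERIV_imp_deriv)
  qed
  have drt: "((\<lambda>s. r0 s x) has_real_derivative rt t x) (at t)" if "t \<in> I" "x \<in> J" for t x
  proof -
    have "((\<lambda>s. veta Q s x u0 - h0 s * u0) has_real_derivative Dt (veta Q) t x u0 - h1 t * u0) (at t)"
      using smooth3_D0(1)[OF sm(3) that u0] dh[OF that(1)] by (auto intro!: derivative_eq_intros)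
    then have "((\<lambda>s. r0 s x) has_real_derivative Dt (veta Q) t x u0 - h1 t * u0) (at t)"
      by (rule has_field_derivative_transform_within_open[OF _ oI that(1)]) (use eq that u0 in auto)
    then show ?thesis unfolding rt_def by (simp add: DERIV_imp_deriv)
  qed
  have drx: "((\<lambda>y. r0 t y) has_real_derivative rx t x) (at x)" if "t \<in> I" "x \<in> J" for t x
  proof -
    have "((\<lambda>y. veta Q t y u0 - h0 t * u0) has_real_derivative Dx (veta Q) t x u0) (at x)"
      using smooth3_D0(2)[OF sm(3) that u0] by (auto intro!: derivative_eq_intros)
    then have "((\<lambda>y. r0 t y) has_real_derivative Dx (veta Q) t x u0) (at x)"
      by (rule has_field_derivative_transform_within_open[OF _ oJ that(2)]) (use eq that u0 in auto)
    then show ?thesis unfolding rx_def by (simp add: DERIV_imp_deriv)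
  qed
  have Dt\<tau>: "Dt (vtau Q) t x u = \<tau>1 t" if "t \<in> I" "x \<in> J" "u \<in> U" for t x u
    unfolding \<tau>1_def by (rule Dt_loc[OF oI that(1)]) (use eq that in auto)
  have Dx\<tau>: "Dx (vtau Q) t x u = 0" if "t \<in> I" "x \<in> J" "u \<in> U" for t x u
  proof -
    have "Dx (vtau Q) t x u = deriv (\<lambda>y. \<tau>0 t) x" by (rule Dx_loc[OF oJ that(2)]) (use eq that in auto)
    then show ?thesis by simp
  qed
  have Du\<tau>: "Du (vtau Q) t x u = 0" if "t \<in> I" "x \<in> J" "u \<in> U" for t x u
  proof -
    have "Du (vtau Q) t x u = deriv (\<lambda>y. \<tau>0 t) u" by (rule Du_loc[OF oU that(3)]) (use eq that in auto)
    then show ?thesis by simp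
  qed
  have Dx\<xi>: "Dx (vxi Q) t x u = \<xi>1 x" if "t \<in> I" "x \<in> J" "u \<in> U" for t x u
    unfolding \<xi>1_def by (rule Dx_loc[OF oJ that(2)]) (use eq that in auto)
  have Dt\<xi>: "Dt (vxi Q) t x u = 0" if "t \<in> I" "x \<in> J" "u \<in> U" for t x u
  proof -
    have "Dt (vxi Q) t x u = deriv (\<lambda>y. \<xi>0 x) t" by (rule Dt_loc[OF oI that(1)]) (use eq that in auto)
    then show ?thesis by simp
  qed
  have Du\<xi>: "Du (vxi Q) t x u = 0" if "t \<in> I" "x \<in> J" "u \<in> U" for t x u
  proof -
    have "Du (vxi Q) t x u = deriv (\<lambda>y. \<xi>0 x) u" by (rule Du_loc[OF oU that(3)]) (use eq that in auto)
    then show ?thesis by simp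
  qed
  have Dt\<eta>: "Dt (veta Q) t x u = h1 t * u + rt t x" if "t \<in> I" "x \<in> J" "u \<in> U" for t x u
  proof -
    have "Dt (veta Q) t x u = deriv (\<lambda>s. h0 s * u + r0 s x) t"
      by (rule Dt_loc[OF oI that(1)]) (use eq that in auto)
    also have "\<dots> = h1 t * u + rt t x"
      by (rule DERIV_imp_deriv) (use dh drt that in \<open>auto intro!: derivative_eq_intros\<close>)
    finally show ?thesis .
  qed
  have Dx\<eta>: "Dx (veta Q) t x u = rx t x" if "t \<in> I" "x \<in> J" "u \<in> U" for t x u
  proof -
    have "Dx (veta Q) t x u = deriv (\<lambda>y. h0 t * u + r0 t y) x"
      by (rule Dx_loc[OF oJ that(2)]) (use eq that in auto)
    also have "\<dots> = rx t x"
      by (rule DERIV_imp_deriv) (use drx that in \<open>auto intro!: derivative_eq_intros\<close>)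
    finally show ?thesis .
  qed
  have L2: "\<forall>t\<in>I. \<forall>x\<in>J. \<forall>u\<in>U. Dx (Dt (vtau Q)) t x u = 0 \<and> Du (Dt (vtau Q)) t x u = 0
   \<and> Dx (Du (vtau Q)) t x u = 0 \<and> Du (Du (vtau Q)) t x u = 0
   \<and> Dx (Dt (vxi Q)) t x u = 0 \<and> Du (Dt (vxi Q)) t x u = 0 \<and> Du (Du (vxi Q)) t x u = 0
   \<and> Dx (Du (vxi Q)) t x u = 0 \<and> Du (Du (veta Q)) t x u = 0 \<and> Du (Dt (veta Q)) t x u = h1 t
   \<and> Dx (Du (veta Q)) t x u = 0 \<and> Dx (Dt (veta Q)) t x u = rtx t x"
  proof (intro ballI)
    fix t x u assume tx: "t \<in> I" "x \<in> J" "u \<in> U"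
    have 1: "Dx (Dt (vtau Q)) t x u = deriv (\<lambda>y. \<tau>1 t) x" by (rule Dx_loc[OF oJ tx(2)]) (use Dt\<tau> tx in auto)
    have 2: "Du (Dt (vtau Q)) t x u = deriv (\<lambda>y. \<tau>1 t) u" by (rule Du_loc[OF oU tx(3)]) (use Dt\<tau> tx in auto)
    have 3: "Dx (Du (vtau Q)) t x u = deriv (\<lambda>y. 0) x" by (rule Dx_loc[OF oJ tx(2)]) (use Du\<tau> tx in auto)
    have 4: "Du (Du (vtau Q)) t x u = deriv (\<lambda>y. 0) u" by (rule Du_loc[OF oU tx(3)]) (use Du\<tau> tx in auto)
    have 5: "Dx (Dt (vxi Q)) t x u = deriv (\<lambda>y. 0) x" by (rule Dx_loc[OF oJ tx(2)]) (use Dt\<xi> tx in auto)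
    have 6: "Du (Dt (vxi Q)) t x u = deriv (\<lambda>y. 0) u" by (rule Du_loc[OF oU tx(3)]) (use Dt\<xi> tx in auto)
    have 7: "Du (Du (vxi Q)) t x u = deriv (\<lambda>y. 0) u" by (rule Du_loc[OF oU tx(3)]) (use Du\<xi> tx in auto)
    have 8: "Dx (Du (vxi Q)) t x u = deriv (\<lambda>y. 0) x" by (rule Dx_loc[OF oJ tx(2)]) (use Du\<xi> tx in auto)
    have 9: "Du (Du (veta Q)) t x u = deriv (\<lambda>y. h0 t) u" by (rule Du_loc[OF oU tx(3)]) (use Du\<eta> tx in auto)
    have 10: "Du (Dt (veta Q)) t x u = deriv (\<lambda>v. h1 t * v + rt t x) u" by (rule Du_loc[OF oU tx(3)]) (use Dt\<eta> tx in auto)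
    have 13: "deriv (\<lambda>v. h1 t * v + rt t x) u = h1 t"
      by (rule DERIV_imp_deriv) (auto intro!: derivative_eq_intros)
    have 11: "Dx (Du (veta Q)) t x u = deriv (\<lambda>y. h0 t) x" by (rule Dx_loc[OF oJ tx(2)]) (use Du\<eta> tx in auto)
    have 12: "Dx (Dt (veta Q)) t x u = deriv (\<lambda>y. h1 t * u + rt t y) x" by (rule Dx_loc[OF oJ tx(2)]) (use Dt\<eta> tx in auto)
    have 14: "deriv (\<lambda>y. h1 t * u + rt t y) x = rtx t x" unfolding rtx_def by (rule deriv_add_const)
    show "Dx (Dt (vtau Q)) t x u = 0 \<and> Du (Dt (vtau Q)) t x u = 0
   \<and> Dx (Du (vtau Q)) t x u = 0 \<and> Du (Du (vtau Q)) t x u = 0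
   \<and> Dx (Dt (vxi Q)) t x u = 0 \<and> Du (Dt (vxi Q)) t x u = 0 \<and> Du (Du (vxi Q)) t x u = 0
   \<and> Dx (Du (vxi Q)) t x u = 0 \<and> Du (Du (veta Q)) t x u = 0 \<and> Du (Dt (veta Q)) t x u = h1 t
   \<and> Dx (Du (veta Q)) t x u = 0 \<and> Dx (Dt (veta Q)) t x u = rtx t x"
      using 1 2 3 4 5 6 7 8 9 10 13 11 12 14 by simp
  qed
  have "FF I J U Q \<tau>0 \<tau>1 \<xi>0 \<xi>1 h0 h1 r0 rt rx rtx"
    unfolding FF_def using d\<tau> d\<xi> dh eq Dt\<tau> Dx\<tau> Du\<tau> Dx\<xi> Dt\<xi> Du\<xi> Du\<eta> Dt\<eta> Dx\<eta> L2 by simp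
  then show ?thesis by blast
qed


lemma FF_pt:
  assumes "FF I J U Q \<tau>0 \<tau>1 \<xi>0 \<xi>1 h0 h1 r0 rt rx rtx" "t \<in> I" "x \<in> J" "u \<in> U"
  shows "vtau Q t x u = \<tau>0 t \<and> Dt (vtau Q) t x u = \<tau>1 t \<and> Dx (vtau Q) t x u = 0
   \<and> Du (vtau Q) t x u = 0 \<and> Dx (Dt (vtau Q)) t x u = 0 \<and> Du (Dt (vtau Q)) t x u = 0
   \<and> Dx (Du (vtau Q)) t x u = 0 \<and> Du (Du (vtau Q)) t x u = 0 \<and>
   vxi Q t x u = \<xi>0 x \<and> Dx (vxi Q) t x u = \<xi>1 x \<and> Dt (vxi Q) t x u = 0 \<and> Du (vxi Q) t x u = 0
   \<and> Dx (Dt (vxi Q)) t x u = 0 \<and> Du (Dt (vxi Q)) t x u = 0 \<and> Du (Du (vxi Q)) t x u = 0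
   \<and> Dx (Du (vxi Q)) t x u = 0 \<and>
   veta Q t x u = h0 t * u + r0 t x \<and> Du (veta Q) t x u = h0 t \<and> Dt (veta Q) t x u = h1 t * u + rt t x
   \<and> Dx (veta Q) t x u = rx t x \<and> Du (Du (veta Q)) t x u = 0 \<and> Du (Dt (veta Q)) t x u = h1 t
   \<and> Dx (Du (veta Q)) t x u = 0 \<and> Dx (Dt (veta Q)) t x u = rtx t x"
  using assms unfolding FF_def by blast

lemma sym_eqs:
  assumes F: "FF I J U Q \<tau>0 \<tau>1 \<xi>0 \<xi>1 h0 h1 r0 rt rx rtx" and S: "is_symmetry I J U g f Q"
    and tx: "t \<in> I" "x \<in> J" "u \<in> U"
  shows "h1 t = \<tau>1 t * g t x + \<tau>0 t * Dt (\<lambda>t x u. g t x) t x u + \<xi>0 x * Dx (\<lambda>t x u. g t x) t x u"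
    and "rtx t x + f t x u * (h0 t - \<tau>1 t - \<xi>1 x) - g t x * rx t x - \<tau>0 t * Dt f t x u
         - \<xi>0 x * Dx f t x u - (h0 t * u + r0 t x) * Du f t x u = 0"
proof -
  note P = FF_pt[OF F tx]
  have Dug: "Du (\<lambda>t x u. g t x) t x u = 0" unfolding Du_def by simp
  have E: "\<And>ux. eta_tx Q t x u 0 ux 0 (g t x * ux + f t x u) 0
        - vapp Q (\<lambda>t x u. g t x) t x u * ux
        - g t x * eta_x Q t x u 0 ux
        - vapp Q f t x u = 0"
    using S tx unfolding is_symmetry_def by blast
  have E': "\<And>ux. rtx t x + ux * h1 t + (g t x * ux + f t x u) * (h0 t - \<tau>1 t - \<xi>1 x)
        - (\<tau>0 t * Dt (\<lambda>t x u. g t x) t x u + \<xi>0 x * Dx (\<lambda>t x u. g t x) t x u) * ux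
        - g t x * (rx t x + ux * h0 t - ux * \<xi>1 x)
        - (\<tau>0 t * Dt f t x u + \<xi>0 x * Dx f t x u + (h0 t * u + r0 t x) * Du f t x u) = 0"
  proof -
    fix ux
    show "?thesis ux" using E[of ux] P Dug
      unfolding eta_tx_def eta_x_def vapp_def Let_def by (simp add: algebra_simps)
  qed
  from E'[of 0] show "rtx t x + f t x u * (h0 t - \<tau>1 t - \<xi>1 x) - g t x * rx t x - \<tau>0 t * Dt f t x u
         - \<xi>0 x * Dx f t x u - (h0 t * u + r0 t x) * Du f t x u = 0" by (simp add: algebra_simps)
  from E'[of 1] E'[of 0] show "h1 t = \<tau>1 t * g t x + \<tau>0 t * Dt (\<lambda>t x u. g t x) t x u + \<xi>0 x * Dx (\<lambda>t x u. g t x) t x u"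
    by (simp add: algebra_simps)
qed


lemma symA':
  assumes F: "FF I J U Q \<tau>0 \<tau>1 \<xi>0 \<xi>1 h0 h1 r0 rt rx rtx" and S: "is_symmetry I J U g f Q"
    and sg: "smooth3 I J U (\<lambda>t x u. g t x)" and oJ: "open J"
    and tx: "t \<in> I" "x \<in> J" "u \<in> U"
  shows "\<tau>1 t * Dx (\<lambda>t x u. g t x) t x u + \<tau>0 t * Dx (Dt (\<lambda>t x u. g t x)) t x u
     + \<xi>1 x * Dx (\<lambda>t x u. g t x) t x u + \<xi>0 x * Dx (Dx (\<lambda>t x u. g t x)) t x u = 0"
proof -
  have d\<xi>: "(\<xi>0 has_real_derivative \<xi>1 x) (at x)" using F tx unfolding FF_def by blast
  have dg: "((\<lambda>y. g t y) has_real_derivative Dx (\<lambda>t x u. g t x) t x u) (at x)"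
    using smooth3_D0(2)[OF sg tx] by simp
  have "((\<lambda>y. \<tau>1 t * g t y + \<tau>0 t * Dt (\<lambda>t x u. g t x) t y u + \<xi>0 y * Dx (\<lambda>t x u. g t x) t y u)
     has_real_derivative \<tau>1 t * Dx (\<lambda>t x u. g t x) t x u + \<tau>0 t * Dx (Dt (\<lambda>t x u. g t x)) t x u
     + (\<xi>1 x * Dx (\<lambda>t x u. g t x) t x u + \<xi>0 x * Dx (Dx (\<lambda>t x u. g t x)) t x u)) (at x)"
    using dg smooth3_Dt(1)[OF sg tx] smooth3_Dx(1)[OF sg tx] d\<xi>
    by (auto intro!: derivative_eq_intros)
  moreover have "\<forall>y\<in>J. \<tau>1 t * g t y + \<tau>0 t * Dt (\<lambda>t x u. g t x) t y u + \<xi>0 y * Dx (\<lambda>t x u. g t x) t y u = h1 t"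
    using sym_eqs(1)[OF F S tx(1) _ tx(3)] by simp
  ultimately have "\<tau>1 t * Dx (\<lambda>t x u. g t x) t x u + \<tau>0 t * Dx (Dt (\<lambda>t x u. g t x)) t x u
     + (\<xi>1 x * Dx (\<lambda>t x u. g t x) t x u + \<xi>0 x * Dx (Dx (\<lambda>t x u. g t x)) t x u) = 0"
    by (rule deriv_zero_const[OF _ oJ tx(2)])
  then show ?thesis by simp
qed

lemma symCu:
  assumes F: "FF I J U Q \<tau>0 \<tau>1 \<xi>0 \<xi>1 h0 h1 r0 rt rx rtx" and S: "is_symmetry I J U g f Q"
    and sf: "smooth3 I J U f" and oU: "open U"
    and tx: "t \<in> I" "x \<in> J" "u \<in> U"
  shows "\<tau>0 t * Du (Dt f) t x u + \<xi>0 x * Du (Dx f) t x u + (h0 t * u + r0 t x) * Du (Du f) t x u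
     = - (\<tau>1 t + \<xi>1 x) * Du f t x u"
proof -
  have "((\<lambda>v. rtx t x + f t x v * (h0 t - \<tau>1 t - \<xi>1 x) - g t x * rx t x - \<tau>0 t * Dt f t x v
         - \<xi>0 x * Dx f t x v - (h0 t * v + r0 t x) * Du f t x v) has_real_derivative
        Du f t x u * (h0 t - \<tau>1 t - \<xi>1 x) - \<tau>0 t * Du (Dt f) t x u - \<xi>0 x * Du (Dx f) t x u
        - (h0 t * Du f t x u + (h0 t * u + r0 t x) * Du (Du f) t x u)) (at u)"
    using smooth3_D0(3)[OF sf tx] smooth3_Dt(2)[OF sf tx] smooth3_Dx(2)[OF sf tx] smooth3_Du(2)[OF sf tx]
    by (auto intro!: derivative_eq_intros simp: algebra_simps)
  moreover have "\<forall>v\<in>U. rtx t x + f t x v * (h0 t - \<tau>1 t - \<xi>1 x) - g t x * rx t x - \<tau>0 t * Dt f t x v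
         - \<xi>0 x * Dx f t x v - (h0 t * v + r0 t x) * Du f t x v = 0"
    using sym_eqs(2)[OF F S tx(1,2)] by simp
  ultimately have "Du f t x u * (h0 t - \<tau>1 t - \<xi>1 x) - \<tau>0 t * Du (Dt f) t x u - \<xi>0 x * Du (Dx f) t x u
        - (h0 t * Du f t x u + (h0 t * u + r0 t x) * Du (Du f) t x u) = 0"
    by (rule deriv_zero_const[OF _ oU tx(3)])
  then show ?thesis by (simp add: algebra_simps)
qed


lemma bracket_rel:
  assumes FP: "FF I J U P \<tau>P \<tau>1P \<xi>P \<xi>1P hP h1P rP rtP rxP rtxP"
    and FQ: "FF I J U Q \<tau>Q \<tau>1Q \<xi>Q \<xi>1Q hQ h1Q rQ rtQ rxQ rtxQ"
    and FS: "FF I J U S \<tau>S \<tau>1S \<xi>S \<xi>1S hS h1S rS rtS rxS rtxS"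
    and E: "vf_eq_on I J U (lie_bracket P Q) S'"
    and K: "\<forall>t\<in>I. \<forall>x\<in>J. \<forall>u\<in>U. vtau S' t x u = k * vtau S t x u \<and> vxi S' t x u = k * vxi S t x u
              \<and> veta S' t x u = k * veta S t x u"
    and nI: "t0 \<in> I" and nJ: "x0 \<in> J" and u1: "u1 \<in> U" and u2: "u2 \<in> U" and u12: "u1 \<noteq> u2"
  shows "\<forall>t\<in>I. \<tau>P t * \<tau>1Q t - \<tau>Q t * \<tau>1P t = k * \<tau>S t"
    and "\<forall>x\<in>J. \<xi>P x * \<xi>1Q x - \<xi>Q x * \<xi>1P x = k * \<xi>S x"
    and "\<forall>t\<in>I. \<tau>P t * h1Q t - \<tau>Q t * h1P t = k * hS t"
    and "\<forall>t\<in>I. \<forall>x\<in>J. \<forall>u\<in>U. \<tau>P t * (h1Q t * u + rtQ t x) + \<xi>P x * rxQ t x + (hP t * u + rP t x) * hQ t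
          - (\<tau>Q t * (h1P t * u + rtP t x) + \<xi>Q x * rxP t x + (hQ t * u + rQ t x) * hP t) = k * (hS t * u + rS t x)"
proof -
  have main: "\<tau>P t * \<tau>1Q t - \<tau>Q t * \<tau>1P t = k * \<tau>S t \<and> \<xi>P x * \<xi>1Q x - \<xi>Q x * \<xi>1P x = k * \<xi>S x \<and>
     \<tau>P t * (h1Q t * u + rtQ t x) + \<xi>P x * rxQ t x + (hP t * u + rP t x) * hQ t
          - (\<tau>Q t * (h1P t * u + rtP t x) + \<xi>Q x * rxP t x + (hQ t * u + rQ t x) * hP t) = k * (hS t * u + rS t x)"
    if tx: "t \<in> I" "x \<in> J" "u \<in> U" for t x u
  proof -
    note A = FF_pt[OF FP tx] and B = FF_pt[OF FQ tx] and C = FF_pt[OF FS tx]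
    have "vtau (lie_bracket P Q) t x u = vtau S' t x u" "vxi (lie_bracket P Q) t x u = vxi S' t x u"
      "veta (lie_bracket P Q) t x u = veta S' t x u"
      using E tx unfolding vf_eq_on_def by auto
    then show ?thesis using A B C K tx
      unfolding lie_bracket_def vapp_def by (simp add: vtau_def vxi_def veta_def algebra_simps)
  qed
  show "\<forall>t\<in>I. \<tau>P t * \<tau>1Q t - \<tau>Q t * \<tau>1P t = k * \<tau>S t" using main nJ u1 by blast
  show "\<forall>x\<in>J. \<xi>P x * \<xi>1Q x - \<xi>Q x * \<xi>1P x = k * \<xi>S x" using main nI u1 by blast
  show "\<forall>t\<in>I. \<forall>x\<in>J. \<forall>u\<in>U. \<tau>P t * (h1Q t * u + rtQ t x) + \<xi>P x * rxQ t x + (hP t * u + rP t x) * hQ t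
          - (\<tau>Q t * (h1P t * u + rtP t x) + \<xi>Q x * rxP t x + (hQ t * u + rQ t x) * hP t) = k * (hS t * u + rS t x)"
    using main by blast
  show "\<forall>t\<in>I. \<tau>P t * h1Q t - \<tau>Q t * h1P t = k * hS t"
  proof
    fix t assume t: "t \<in> I"
    have a: "\<tau>P t * (h1Q t * u1 + rtQ t x0) + \<xi>P x0 * rxQ t x0 + (hP t * u1 + rP t x0) * hQ t
          - (\<tau>Q t * (h1P t * u1 + rtP t x0) + \<xi>Q x0 * rxP t x0 + (hQ t * u1 + rQ t x0) * hP t) = k * (hS t * u1 + rS t x0)"
      using main[OF t nJ u1] by blast
    have b: "\<tau>P t * (h1Q t * u2 + rtQ t x0) + \<xi>P x0 * rxQ t x0 + (hP t * u2 + rP t x0) * hQ t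
          - (\<tau>Q t * (h1P t * u2 + rtP t x0) + \<xi>Q x0 * rxP t x0 + (hQ t * u2 + rQ t x0) * hP t) = k * (hS t * u2 + rS t x0)"
      using main[OF t nJ u2] by blast
    have "(\<tau>P t * h1Q t - \<tau>Q t * h1P t - k * hS t) * (u1 - u2) = 0"
      using a b by (simp add: algebra_simps)
    then show "\<tau>P t * h1Q t - \<tau>Q t * h1P t = k * hS t" using u12 by simp
  qed
qed


lemma keyA:
  fixes T1 T2 T3 S1 S2 S3 X1 X2 X3 Y1 Y2 Y3 H1 H2 H3 K1 K2 K3 g :: real
  assumes t1: "T1*S2 - T2*S1 = T1" and t2: "T2*S3 - T3*S2 = T3" and t3: "T1*S3 - T3*S1 = 2*T2"
    and x1: "X1*Y2 - X2*Y1 = X1" and x2: "X2*Y3 - X3*Y2 = X3" and x3: "X1*Y3 - X3*Y1 = 2*X2"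
    and h1: "T1*K2 - T2*K1 = H1" and h2: "T2*K3 - T3*K2 = H3" and h3: "T1*K3 - T3*K1 = 2*H2"
    and nz: "\<not> (T2*X3 - T3*X2 = 0 \<and> T3*X1 - T1*X3 = 0 \<and> T1*X2 - T2*X1 = 0)"
    and cH: "(T2*X3 - T3*X2)*H1 + (T3*X1 - T1*X3)*H2 + (T1*X2 - T2*X1)*H3 = 0"
    and cS: "(T2*X3 - T3*X2)*(S1+Y1) + (T3*X1 - T1*X3)*(S2+Y2) + (T1*X2 - T2*X1)*(S3+Y3) = 0"
    and cK: "(T2*X3 - T3*X2)*K1 + (T3*X1 - T1*X3)*K2 + (T1*X2 - T2*X1)*K3
             = ((T2*X3 - T3*X2)*S1 + (T3*X1 - T1*X3)*S2 + (T1*X2 - T2*X1)*S3) * g"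
  shows "H1 = g*T1 \<and> H2 = g*T2 \<and> H3 = g*T3"
proof -
  define c1 where "c1 = T2*X3 - T3*X2"
  define c2 where "c2 = T3*X1 - T1*X3"
  define c3 where "c3 = T1*X2 - T2*X1"
  define l where "l = c1*S1 + c2*S2 + c3*S3"
  have nz': "\<not> (c1 = 0 \<and> c2 = 0 \<and> c3 = 0)" using nz unfolding c1_def c2_def c3_def .
  have cH': "c1*H1 + c2*H2 + c3*H3 = 0" using cH unfolding c1_def c2_def c3_def .
  have cY: "c1*Y1 + c2*Y2 + c3*Y3 = - l" using cS unfolding l_def c1_def c2_def c3_def
    by (simp add: algebra_simps)
  have cK': "c1*K1 + c2*K2 + c3*K3 = l * g" using cK unfolding l_def c1_def c2_def c3_def .
  have cT: "c1*T1 + c2*T2 + c3*T3 = 0" unfolding c1_def c2_def c3_def by algebra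
  have cX: "c1*X1 + c2*X2 + c3*X3 = 0" unfolding c1_def c2_def c3_def by algebra
  have WT1: "-c2*T1 - 2*c3*T2 = -l*T1"
  proof -
    have "-c2*T1 - 2*c3*T2 = -c2*(T1*S2 - T2*S1) - c3*(T1*S3 - T3*S1)" using t1 t3 by simp
    also have "\<dots> = (c1*T1 + c2*T2 + c3*T3)*S1 - T1*l" unfolding l_def by algebra
    finally show ?thesis using cT by simp
  qed
  have WT2: "c1*T1 - c3*T3 = -l*T2"
  proof -
    have "c1*T1 - c3*T3 = c1*(T1*S2 - T2*S1) - c3*(T2*S3 - T3*S2)" using t1 t2 by simp
    also have "\<dots> = (c1*T1 + c2*T2 + c3*T3)*S2 - T2*l" unfolding l_def by algebra
    finally show ?thesis using cT by simp
  qed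
  have WT3: "2*c1*T2 + c2*T3 = -l*T3"
  proof -
    have "2*c1*T2 + c2*T3 = c1*(T1*S3 - T3*S1) + c2*(T2*S3 - T3*S2)" using t3 t2 by simp
    also have "\<dots> = (c1*T1 + c2*T2 + c3*T3)*S3 - T3*l" unfolding l_def by algebra
    finally show ?thesis using cT by simp
  qed
  have WX1: "-c2*X1 - 2*c3*X2 = l*X1"
  proof -
    have "-c2*X1 - 2*c3*X2 = -c2*(X1*Y2 - X2*Y1) - c3*(X1*Y3 - X3*Y1)" using x1 x3 by simp
    also have "\<dots> = (c1*X1 + c2*X2 + c3*X3)*Y1 - X1*(c1*Y1 + c2*Y2 + c3*Y3)" by algebra
    finally show ?thesis using cX cY by simp
  qed
  have WX2: "c1*X1 - c3*X3 = l*X2"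
  proof -
    have "c1*X1 - c3*X3 = c1*(X1*Y2 - X2*Y1) - c3*(X2*Y3 - X3*Y2)" using x1 x2 by simp
    also have "\<dots> = (c1*X1 + c2*X2 + c3*X3)*Y2 - X2*(c1*Y1 + c2*Y2 + c3*Y3)" by algebra
    finally show ?thesis using cX cY by simp
  qed
  have WX3: "2*c1*X2 + c2*X3 = l*X3"
  proof -
    have "2*c1*X2 + c2*X3 = c1*(X1*Y3 - X3*Y1) + c2*(X2*Y3 - X3*Y2)" using x3 x2 by simp
    also have "\<dots> = (c1*X1 + c2*X2 + c3*X3)*Y3 - X3*(c1*Y1 + c2*Y2 + c3*Y3)" by algebra
    finally show ?thesis using cX cY by simp
  qed
  have WH1: "-c2*H1 - 2*c3*H2 = -l*g*T1"
  proof -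
    have "-c2*H1 - 2*c3*H2 = -c2*(T1*K2 - T2*K1) - c3*(T1*K3 - T3*K1)" using h1 h3 by simp
    also have "\<dots> = (c1*T1 + c2*T2 + c3*T3)*K1 - T1*(c1*K1 + c2*K2 + c3*K3)" by algebra
    finally show ?thesis using cT cK' by simp
  qed
  have WH2: "c1*H1 - c3*H3 = -l*g*T2"
  proof -
    have "c1*H1 - c3*H3 = c1*(T1*K2 - T2*K1) - c3*(T2*K3 - T3*K2)" using h1 h2 by simp
    also have "\<dots> = (c1*T1 + c2*T2 + c3*T3)*K2 - T2*(c1*K1 + c2*K2 + c3*K3)" by algebra
    finally show ?thesis using cT cK' by simp
  qed
  have WH3: "2*c1*H2 + c2*H3 = -l*g*T3"
  proof -
    have "2*c1*H2 + c2*H3 = c1*(T1*K3 - T3*K1) + c2*(T2*K3 - T3*K2)" using h3 h2 by simp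
    also have "\<dots> = (c1*T1 + c2*T2 + c3*T3)*K3 - T3*(c1*K1 + c2*K2 + c3*K3)" by algebra
    finally show ?thesis using cT cK' by simp
  qed
  have l0: "l \<noteq> 0"
  proof
    assume l: "l = 0"
    have e1: "-2*c3*c3 = T1*(-c2*X1 - 2*c3*X2) - X1*(-c2*T1 - 2*c3*T2)" unfolding c3_def by algebra
    have e2: "-2*c1*c1 = T3*(2*c1*X2 + c2*X3) - X3*(2*c1*T2 + c2*T3)" unfolding c1_def by algebra
    have e3: "2*c1*c3 - c2*c2 = T1*(2*c1*X2 + c2*X3) - X1*(2*c1*T2 + c2*T3)"
      unfolding c1_def c2_def c3_def by algebra
    have "c3 = 0" using e1 WT1 WX1 l by simp
    moreover have "c1 = 0" using e2 WT3 WX3 l by simp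
    moreover have "c2 = 0"
    proof -
      have q1: "c2*T3 = 0" using WT3 l \<open>c1 = 0\<close> by simp
      have q2: "c2*X3 = 0" using WX3 l \<open>c1 = 0\<close> by simp
      have "2*c1*c3 - c2*c2 = T1*(2*c1*X2) + T1*(c2*X3) - X1*(2*c1*T2) - X1*(c2*T3)"
        using e3 by (simp add: algebra_simps)
      then have "c2*c2 = 0" using q1 q2 \<open>c1 = 0\<close> by simp
      then show ?thesis by simp
    qed
    ultimately show False using nz' by simp
  qed
  define D1 where "D1 = H1 - g*T1"
  define D2 where "D2 = H2 - g*T2"
  define D3 where "D3 = H3 - g*T3"
  have cD: "c1*D1 + c2*D2 + c3*D3 = 0"
  proof -
    have "c1*D1 + c2*D2 + c3*D3 = (c1*H1 + c2*H2 + c3*H3) - g*(c1*T1 + c2*T2 + c3*T3)"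
      unfolding D1_def D2_def D3_def by (simp add: algebra_simps)
    then show ?thesis using cH' cT by simp
  qed
  have WD1: "-c2*D1 - 2*c3*D2 = 0"
  proof -
    have "-c2*D1 - 2*c3*D2 = (-c2*H1 - 2*c3*H2) - g*(-c2*T1 - 2*c3*T2)"
      unfolding D1_def D2_def by (simp add: algebra_simps)
    then show ?thesis using WH1 WT1 by simp
  qed
  have WD2: "c1*D1 - c3*D3 = 0"
  proof -
    have "c1*D1 - c3*D3 = (c1*H1 - c3*H3) - g*(c1*T1 - c3*T3)"
      unfolding D1_def D3_def by (simp add: algebra_simps)
    then show ?thesis using WH2 WT2 by simp
  qed
  have WD3: "2*c1*D2 + c2*D3 = 0"
  proof -
    have "2*c1*D2 + c2*D3 = (2*c1*H2 + c2*H3) - g*(2*c1*T2 + c2*T3)"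
      unfolding D2_def D3_def by (simp add: algebra_simps)
    then show ?thesis using WH3 WT3 by simp
  qed
  define N where "N = c1*c1 + c2*c2 + c3*c3"
  have N0: "N \<noteq> 0"
  proof
    assume "N = 0"
    then have "c1*c1 + c2*c2 + c3*c3 = 0" unfolding N_def .
    moreover have "c1*c1 \<ge> 0" "c2*c2 \<ge> 0" "c3*c3 \<ge> 0" by simp_all
    ultimately have "c1*c1 = 0" "c2*c2 = 0" "c3*c3 = 0" by linarith+
    then have "c1 = 0 \<and> c2 = 0 \<and> c3 = 0" by simp
    then show False using nz' by simp
  qed
  define al where "al = (D1*T1+D2*T2+D3*T3)*(X1*X1+X2*X2+X3*X3) - (D1*X1+D2*X2+D3*X3)*(T1*X1+T2*X2+T3*X3)"
  define be where "be = (D1*X1+D2*X2+D3*X3)*(T1*T1+T2*T2+T3*T3) - (D1*T1+D2*T2+D3*T3)*(T1*X1+T2*X2+T3*X3)"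
  have G1: "N*D1 = al*T1 + be*X1 + (c1*D1+c2*D2+c3*D3)*c1"
    unfolding N_def al_def be_def c1_def c2_def c3_def by algebra
  have G2: "N*D2 = al*T2 + be*X2 + (c1*D1+c2*D2+c3*D3)*c2"
    unfolding N_def al_def be_def c1_def c2_def c3_def by algebra
  have G3: "N*D3 = al*T3 + be*X3 + (c1*D1+c2*D2+c3*D3)*c3"
    unfolding N_def al_def be_def c1_def c2_def c3_def by algebra
  have G1': "N*D1 = al*T1 + be*X1" and G2': "N*D2 = al*T2 + be*X2" and G3': "N*D3 = al*T3 + be*X3"
    using G1 G2 G3 cD by simp_all
  have z1: "l*(-al*T1 + be*X1) = 0"
  proof -
    have "N*(-c2*D1 - 2*c3*D2) = -c2*(N*D1) - 2*c3*(N*D2)" by (simp add: algebra_simps)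
    also have "\<dots> = -c2*(al*T1 + be*X1) - 2*c3*(al*T2 + be*X2)"
      by (simp only: G1' G2' G3')
    also have "\<dots> = al*(-c2*T1 - 2*c3*T2) + be*(-c2*X1 - 2*c3*X2)" by (simp add: algebra_simps)
    finally have "N*(-c2*D1 - 2*c3*D2) = al*(-c2*T1 - 2*c3*T2) + be*(-c2*X1 - 2*c3*X2)" .
    then have "al*(-c2*T1 - 2*c3*T2) + be*(-c2*X1 - 2*c3*X2) = 0" using WD1 by simp
    then have "al*(-l*T1) + be*(l*X1) = 0" unfolding WT1 WX1 .
    moreover have "l*(-al*T1 + be*X1) = al*(-l*T1) + be*(l*X1)" by (simp add: algebra_simps)
    ultimately show ?thesis by simp
  qed
  have z2: "l*(-al*T2 + be*X2) = 0"
  proof -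
    have "N*(c1*D1 - c3*D3) = c1*(N*D1) - c3*(N*D3)" by (simp add: algebra_simps)
    also have "\<dots> = c1*(al*T1 + be*X1) - c3*(al*T3 + be*X3)"
      by (simp only: G1' G2' G3')
    also have "\<dots> = al*(c1*T1 - c3*T3) + be*(c1*X1 - c3*X3)" by (simp add: algebra_simps)
    finally have "N*(c1*D1 - c3*D3) = al*(c1*T1 - c3*T3) + be*(c1*X1 - c3*X3)" .
    then have "al*(c1*T1 - c3*T3) + be*(c1*X1 - c3*X3) = 0" using WD2 by simp
    then have "al*(-l*T2) + be*(l*X2) = 0" unfolding WT2 WX2 .
    moreover have "l*(-al*T2 + be*X2) = al*(-l*T2) + be*(l*X2)" by (simp add: algebra_simps)
    ultimately show ?thesis by simp
  qed
  have z3: "l*(-al*T3 + be*X3) = 0"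
  proof -
    have "N*(2*c1*D2 + c2*D3) = 2*c1*(N*D2) + c2*(N*D3)" by (simp add: algebra_simps)
    also have "\<dots> = 2*c1*(al*T2 + be*X2) + c2*(al*T3 + be*X3)"
      by (simp only: G1' G2' G3')
    also have "\<dots> = al*(2*c1*T2 + c2*T3) + be*(2*c1*X2 + c2*X3)" by (simp add: algebra_simps)
    finally have "N*(2*c1*D2 + c2*D3) = al*(2*c1*T2 + c2*T3) + be*(2*c1*X2 + c2*X3)" .
    then have "al*(2*c1*T2 + c2*T3) + be*(2*c1*X2 + c2*X3) = 0" using WD3 by simp
    then have "al*(-l*T3) + be*(l*X3) = 0" unfolding WT3 WX3 .
    moreover have "l*(-al*T3 + be*X3) = al*(-l*T3) + be*(l*X3)" by (simp add: algebra_simps)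
    ultimately show ?thesis by simp
  qed
  have a1: "al*T1 = be*X1" and a2: "al*T2 = be*X2" and a3: "al*T3 = be*X3"
    using z1 z2 z3 l0 by simp_all
  have "al*c1 = (al*T2)*X3 - (al*T3)*X2" "al*c2 = (al*T3)*X1 - (al*T1)*X3" "al*c3 = (al*T1)*X2 - (al*T2)*X1"
    unfolding c1_def c2_def c3_def by (simp_all add: algebra_simps)
  then have A: "al*c1 = 0" "al*c2 = 0" "al*c3 = 0"
    by (simp_all only: a1 a2 a3) (simp_all add: algebra_simps)
  have "be*c1 = T2*(be*X3) - T3*(be*X2)" "be*c2 = T3*(be*X1) - T1*(be*X3)" "be*c3 = T1*(be*X2) - T2*(be*X1)"
    unfolding c1_def c2_def c3_def by (simp_all add: algebra_simps)
  then have "be*c1 = 0" "be*c2 = 0" "be*c3 = 0"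
    by (simp_all only: a1[symmetric] a2[symmetric] a3[symmetric]) (simp_all add: algebra_simps)
  note A this
  then have "al = 0 \<and> be = 0" using nz' by auto
  then have "N*D1 = 0" "N*D2 = 0" "N*D3 = 0" using G1' G2' G3' by simp_all
  then have "D1 = 0" "D2 = 0" "D3 = 0" using N0 by simp_all
  then show ?thesis unfolding D1_def D2_def D3_def by simp
qed


lemma so3_alg:
  fixes a1 a2 a3 b1 b2 b3 :: real
  assumes "a1*b2 - a2*b1 = a3" "a2*b3 - a3*b2 = a1" "a3*b1 - a1*b3 = a2"
  shows "a1 = 0 \<and> a2 = 0 \<and> a3 = 0"
proof -
  have "a1*a1 + a2*a2 + a3*a3 = a3*(a1*b2 - a2*b1) + a1*(a2*b3 - a3*b2) + a2*(a3*b1 - a1*b3)"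
    using assms by simp
  also have "\<dots> = 0" by (simp add: algebra_simps)
  finally have s: "a1*a1 + a2*a2 + a3*a3 = 0" .
  moreover have "a1*a1 \<ge> 0" "a2*a2 \<ge> 0" "a3*a3 \<ge> 0" by simp_all
  ultimately have "a1*a1 = 0" "a2*a2 = 0" "a3*a3 = 0" by linarith+
  then show ?thesis by simp
qed

lemma par_alg:
  fixes T1 T2 T3 S1 S2 S3 w1 w2 w3 :: real
  assumes "T1 * w2 = T2 * w1" "T1 * w3 = T3 * w1" "T2 * w3 = T3 * w2"
    and "S1 * w2 = S2 * w1" "S1 * w3 = S3 * w1" "S2 * w3 = S3 * w2"
    and "\<not> (w1 = 0 \<and> w2 = 0 \<and> w3 = 0)"
  shows "T1*S2 - T2*S1 = 0 \<and> T2*S3 - T3*S2 = 0 \<and> T1*S3 - T3*S1 = 0"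
proof -
  have k1: "(T1*S2 - T2*S1)*(w1 * w1) = 0" "(T2*S3 - T3*S2)*(w1 * w1) = 0" "(T1*S3 - T3*S1)*(w1 * w1) = 0"
    using assms(1-6) by algebra+
  have k2: "(T1*S2 - T2*S1)*(w2 * w2) = 0" "(T2*S3 - T3*S2)*(w2 * w2) = 0" "(T1*S3 - T3*S1)*(w2 * w2) = 0"
    using assms(1-6) by algebra+
  have k3: "(T1*S2 - T2*S1)*(w3 * w3) = 0" "(T2*S3 - T3*S2)*(w3 * w3) = 0" "(T1*S3 - T3*S1)*(w3 * w3) = 0"
    using assms(1-6) by algebra+
  show ?thesis
    using k1 k2 k3 assms(7) by auto
qed

lemma combine3:
  fixes T1 T2 T3 X1 X2 X3 W1 W2 W3 A B F Z1 Z2 Z3 :: real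
  assumes "T1*A + X1*B + W1*F = Z1" "T2*A + X2*B + W2*F = Z2" "T3*A + X3*B + W3*F = Z3"
  shows "((T2*X3 - T3*X2)*W1 + (T3*X1 - T1*X3)*W2 + (T1*X2 - T2*X1)*W3)*F
    = (T2*X3 - T3*X2)*Z1 + (T3*X1 - T1*X3)*Z2 + (T1*X2 - T2*X1)*Z3"
proof -
  have "(T2*X3 - T3*X2)*Z1 + (T3*X1 - T1*X3)*Z2 + (T1*X2 - T2*X1)*Z3
     = (T2*X3 - T3*X2)*(T1*A + X1*B + W1*F) + (T3*X1 - T1*X3)*(T2*A + X2*B + W2*F)
       + (T1*X2 - T2*X1)*(T3*A + X3*B + W3*F)" using assms by simp
  also have "\<dots> = ((T2*X3 - T3*X2)*W1 + (T3*X1 - T1*X3)*W2 + (T1*X2 - T2*X1)*W3)*F"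
    by algebra
  finally show ?thesis by simp
qed

lemma FF_der:
  assumes "FF I J U Q \<tau>0 \<tau>1 \<xi>0 \<xi>1 h0 h1 r0 rt rx rtx"
  shows "t \<in> I \<Longrightarrow> (\<tau>0 has_real_derivative \<tau>1 t) (at t)"
    "x \<in> J \<Longrightarrow> (\<xi>0 has_real_derivative \<xi>1 x) (at x)"
    "t \<in> I \<Longrightarrow> (h0 has_real_derivative h1 t) (at t)"
  using assms unfolding FF_def by blast+

lemma zero_deriv_on:
  assumes "open I" "t \<in> I" "(\<phi> has_real_derivative d) (at t)" "\<forall>s\<in>I. \<phi> s = 0"
  shows "d = 0"
  using deriv_zero_const[OF assms(3,1,2)] assms(4) by blast


lemma symA'_c:
  assumes F: "FF I J U Q \<tau>0 \<tau>1 \<xi>0 \<xi>1 h0 h1 r0 rt rx rtx" and S: "is_symmetry I J U g f Q"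
    and sg: "smooth3 I J U (\<lambda>t x u. g t x)" and oJ: "open J"
    and tx: "t \<in> I" "x \<in> J" "u \<in> U"
  shows "\<tau>0 t * Dx (Dt (\<lambda>t x u. g t x)) t x u + \<xi>0 x * Dx (Dx (\<lambda>t x u. g t x)) t x u
     + (\<tau>1 t + \<xi>1 x) * Dx (\<lambda>t x u. g t x) t x u = 0"
  using symA'[OF F S sg oJ tx] by (simp add: algebra_simps)

lemma symA_c:
  assumes F: "FF I J U Q \<tau>0 \<tau>1 \<xi>0 \<xi>1 h0 h1 r0 rt rx rtx" and S: "is_symmetry I J U g f Q"
    and tx: "t \<in> I" "x \<in> J" "u \<in> U"
  shows "\<tau>0 t * Dt (\<lambda>t x u. g t x) t x u + \<xi>0 x * Dx (\<lambda>t x u. g t x) t x u + \<tau>1 t * g t x = h1 t"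
  using sym_eqs(1)[OF F S tx] by (simp add: algebra_simps)

theorem theorem6:
  fixes I J U :: "real set" and g :: "real \<Rightarrow> real \<Rightarrow> real" and f :: fn3
    and P Q R :: vfield
  assumes "open I" "is_interval I" "I \<noteq> {}"
    and "open J" "is_interval J" "J \<noteq> {}"
    and "open U" "is_interval U" "U \<noteq> {}"
    and "smooth3 I J U (\<lambda>t x u. g t x)" and "smooth3 I J U f"
    and "\<forall>t\<in>I. \<forall>x\<in>J. \<forall>u\<in>U. Dx (\<lambda>t x u. g t x) t x u \<noteq> 0"
    and "\<forall>t\<in>I. \<forall>x\<in>J. \<forall>u\<in>U. Du (Du f) t x u \<noteq> 0"
    and "admissible_field I J U P" "admissible_field I J U Q" "admissible_field I J U R"
    and "is_symmetry I J U g f P" "is_symmetry I J U g f Q" "is_symmetry I J U g f R"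
    and "lin_indep3 I J U P Q R"
  shows "\<not> so3_relations I J U P Q R \<and> \<not> sl2_relations I J U P Q R"
proof -
  note oI = assms(1) and oJ = assms(4) and oU = assms(7)
  note sg = assms(10) and sf = assms(11) and gx0 = assms(12) and fuu0 = assms(13)
  note SP = assms(17) and SQ = assms(18) and SR = assms(19) and LI = assms(20)
  obtain \<tau>P \<tau>1P \<xi>P \<xi>1P hP h1P rP rtP rxP rtxP where FP: "FF I J U P \<tau>P \<tau>1P \<xi>P \<xi>1P hP h1P rP rtP rxP rtxP"
    using field_facts[OF assms(1,4,7,3,6,9,14)] by blast
  obtain \<tau>Q \<tau>1Q \<xi>Q \<xi>1Q hQ h1Q rQ rtQ rxQ rtxQ where FQ: "FF I J U Q \<tau>Q \<tau>1Q \<xi>Q \<xi>1Q hQ h1Q rQ rtQ rxQ rtxQ"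
    using field_facts[OF assms(1,4,7,3,6,9,15)] by blast
  obtain \<tau>R \<tau>1R \<xi>R \<xi>1R hR h1R rR rtR rxR rtxR where FR: "FF I J U R \<tau>R \<tau>1R \<xi>R \<xi>1R hR h1R rR rtR rxR rtxR"
    using field_facts[OF assms(1,4,7,3,6,9,16)] by blast
  obtain t0 where t0: "t0 \<in> I" using assms(3) by blast
  obtain x0 where x0: "x0 \<in> J" using assms(6) by blast
  obtain u1 where u1: "u1 \<in> U" using assms(9) by blast
  obtain e where e: "e > 0" "ball u1 e \<subseteq> U" using oU u1 openE by blast
  define u2 where "u2 = u1 + e/2"
  have u2: "u2 \<in> U" using e unfolding u2_def by (intro subsetD[OF e(2)]) (simp add: dist_real_def)
  have u12: "u1 \<noteq> u2" using e unfolding u2_def by simp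
  have Kid: "\<And>S. \<forall>t\<in>I. \<forall>x\<in>J. \<forall>u\<in>U. vtau S t x u = 1 * vtau S t x u \<and> vxi S t x u = 1 * vxi S t x u
              \<and> veta S t x u = 1 * veta S t x u" by simp
  have K2: "\<And>S. \<forall>t\<in>I. \<forall>x\<in>J. \<forall>u\<in>U. vtau (vscale 2 S) t x u = 2 * vtau S t x u
      \<and> vxi (vscale 2 S) t x u = 2 * vxi S t x u \<and> veta (vscale 2 S) t x u = 2 * veta S t x u"
    by (simp add: vscale_def vtau_def vxi_def veta_def)
  have zero_contra: False
    if z1: "\<forall>t\<in>I. \<tau>P t = 0 \<and> \<tau>Q t = 0 \<and> \<tau>R t = 0 \<and> hP t = 0 \<and> hQ t = 0 \<and> hR t = 0"
      and z2: "\<forall>x\<in>J. \<xi>P x = 0 \<and> \<xi>Q x = 0 \<and> \<xi>R x = 0"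
      and z3: "\<forall>t\<in>I. \<forall>x\<in>J. rP t x = 0"
  proof -
    have "vf_eq_on I J U (vlin3 1 P 0 Q 0 R) vzero"
      unfolding vf_eq_on_def
    proof (intro ballI)
      fix t x u assume tx: "t \<in> I" "x \<in> J" "u \<in> U"
      note A = FF_pt[OF FP tx]
      show "vtau (vlin3 1 P 0 Q 0 R) t x u = vtau vzero t x u \<and> vxi (vlin3 1 P 0 Q 0 R) t x u = vxi vzero t x u \<and>
         veta (vlin3 1 P 0 Q 0 R) t x u = veta vzero t x u"
        using A z1 z2 z3 tx by (simp add: vlin3_def vzero_def vtau_def vxi_def veta_def)
    qed
    then show False using LI unfolding lin_indep3_def by force
  qed
  show ?thesis
  proof (intro conjI notI)
    assume so3: "so3_relations I J U P Q R"
    have E1: "vf_eq_on I J U (lie_bracket P Q) R" and E2: "vf_eq_on I J U (lie_bracket Q R) P"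
      and E3: "vf_eq_on I J U (lie_bracket R P) Q" using so3 unfolding so3_relations_def by auto
    note b1 = bracket_rel[OF FP FQ FR E1 Kid t0 x0 u1 u2 u12]
    note b2 = bracket_rel[OF FQ FR FP E2 Kid t0 x0 u1 u2 u12]
    note b3 = bracket_rel[OF FR FP FQ E3 Kid t0 x0 u1 u2 u12]
    have T0: "\<tau>P t = 0 \<and> \<tau>Q t = 0 \<and> \<tau>R t = 0" if "t \<in> I" for t
      using so3_alg[of "\<tau>P t" "\<tau>1Q t" "\<tau>Q t" "\<tau>1P t" "\<tau>R t" "\<tau>1R t"] b1(1) b2(1) b3(1) that by simp
    have X0: "\<xi>P x = 0 \<and> \<xi>Q x = 0 \<and> \<xi>R x = 0" if "x \<in> J" for x
      using so3_alg[of "\<xi>P x" "\<xi>1Q x" "\<xi>Q x" "\<xi>1P x" "\<xi>R x" "\<xi>1R x"] b1(2) b2(2) b3(2) that by simp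
    have H0: "hP t = 0 \<and> hQ t = 0 \<and> hR t = 0" if "t \<in> I" for t
      using b1(3)[rule_format, OF that] b2(3)[rule_format, OF that] b3(3)[rule_format, OF that] T0[OF that] by simp
    have R0: "rP t x = 0" if "t \<in> I" "x \<in> J" for t x
      using b2(4)[rule_format, OF that u1] T0[OF that(1)] H0[OF that(1)] X0[OF that(2)] by simp
    show False using zero_contra T0 H0 X0 R0 by blast
  next
    assume sl2: "sl2_relations I J U P Q R"
    have E1: "vf_eq_on I J U (lie_bracket P Q) P" and E2: "vf_eq_on I J U (lie_bracket Q R) R"
      and E3: "vf_eq_on I J U (lie_bracket P R) (vscale 2 Q)" using sl2 unfolding sl2_relations_def by auto
    note b1 = bracket_rel[OF FP FQ FP E1 Kid t0 x0 u1 u2 u12]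
    note b2 = bracket_rel[OF FQ FR FR E2 Kid t0 x0 u1 u2 u12]
    note b3 = bracket_rel[OF FP FR FQ E3 K2 t0 x0 u1 u2 u12]
    have tb: "\<tau>P t*\<tau>1Q t - \<tau>Q t*\<tau>1P t = \<tau>P t \<and> \<tau>Q t*\<tau>1R t - \<tau>R t*\<tau>1Q t = \<tau>R t
       \<and> \<tau>P t*\<tau>1R t - \<tau>R t*\<tau>1P t = 2*\<tau>Q t" if "t \<in> I" for t
      using b1(1)[rule_format, OF that] b2(1)[rule_format, OF that] b3(1)[rule_format, OF that] by simp
    have xb: "\<xi>P x*\<xi>1Q x - \<xi>Q x*\<xi>1P x = \<xi>P x \<and> \<xi>Q x*\<xi>1R x - \<xi>R x*\<xi>1Q x = \<xi>R x
       \<and> \<xi>P x*\<xi>1R x - \<xi>R x*\<xi>1P x = 2*\<xi>Q x" if "x \<in> J" for x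
      using b1(2)[rule_format, OF that] b2(2)[rule_format, OF that] b3(2)[rule_format, OF that] by simp
    have hb: "\<tau>P t*h1Q t - \<tau>Q t*h1P t = hP t \<and> \<tau>Q t*h1R t - \<tau>R t*h1Q t = hR t
       \<and> \<tau>P t*h1R t - \<tau>R t*h1P t = 2*hQ t" if "t \<in> I" for t
      using b1(3)[rule_format, OF that] b2(3)[rule_format, OF that] b3(3)[rule_format, OF that] by simp
    have zT: False if zt: "\<forall>t\<in>I. \<tau>P t = 0 \<and> \<tau>Q t = 0 \<and> \<tau>R t = 0"
      and zx: "\<forall>x\<in>J. \<xi>P x = 0 \<and> \<xi>Q x = 0 \<and> \<xi>R x = 0"
    proof -
      have H0: "hP t = 0 \<and> hQ t = 0 \<and> hR t = 0" if "t \<in> I" for t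
        using hb[OF that] zt that by simp
      have R0: "rP t x = 0" if "t \<in> I" "x \<in> J" for t x
        using b1(4)[rule_format, OF that u1] zt zx H0[OF that(1)] that by simp
      show False using zero_contra zt zx H0 R0 by blast
    qed
    show False
    proof (cases "\<exists>t\<in>I. \<exists>x\<in>J. \<not> (\<tau>Q t * \<xi>R x - \<tau>R t * \<xi>Q x = 0 \<and> \<tau>R t * \<xi>P x - \<tau>P t * \<xi>R x = 0
                    \<and> \<tau>P t * \<xi>Q x - \<tau>Q t * \<xi>P x = 0)")
      case True
      then obtain tA xA where tA: "tA \<in> I" and xA: "xA \<in> J" and
        nzA: "\<not> (\<tau>Q tA * \<xi>R xA - \<tau>R tA * \<xi>Q xA = 0 \<and> \<tau>R tA * \<xi>P xA - \<tau>P tA * \<xi>R xA = 0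
                    \<and> \<tau>P tA * \<xi>Q xA - \<tau>Q tA * \<xi>P xA = 0)" by blast
      define N where "N = (\<lambda>x. (\<tau>Q tA * \<xi>R x - \<tau>R tA * \<xi>Q x)^2 + (\<tau>R tA * \<xi>P x - \<tau>P tA * \<xi>R x)^2
                    + (\<tau>P tA * \<xi>Q x - \<tau>Q tA * \<xi>P x)^2)"
      have Nnz: "N y \<noteq> 0 \<longleftrightarrow> \<not> (\<tau>Q tA * \<xi>R y - \<tau>R tA * \<xi>Q y = 0 \<and> \<tau>R tA * \<xi>P y - \<tau>P tA * \<xi>R y = 0
                    \<and> \<tau>P tA * \<xi>Q y - \<tau>Q tA * \<xi>P y = 0)" for y
        unfolding N_def by (simp add: add_nonneg_eq_0_iff)
      have cP: "isCont \<xi>P xA" using DERIV_isCont[OF FF_der(2)[OF FP xA]] .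
      have cQ: "isCont \<xi>Q xA" using DERIV_isCont[OF FF_der(2)[OF FQ xA]] .
      have cR: "isCont \<xi>R xA" using DERIV_isCont[OF FF_der(2)[OF FR xA]] .
      have cN: "isCont N xA" unfolding N_def using cP cQ cR by (intro continuous_intros) auto
      obtain \<epsilon> where \<epsilon>: "\<epsilon> > 0" "\<forall>y. dist xA y < \<epsilon> \<longrightarrow> N y \<noteq> 0"
        using continuous_at_avoid[OF cN, of 0] nzA Nnz by blast
      define S where "S = J \<inter> ball xA \<epsilon>"
      have oS: "open S" unfolding S_def using oJ by auto
      have xAS: "xA \<in> S" unfolding S_def using xA \<epsilon> by simp
      have key: "hP tA = g tA y * \<tau>P tA \<and> hQ tA = g tA y * \<tau>Q tA \<and> hR tA = g tA y * \<tau>R tA"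
        if yS: "y \<in> S" for y
      proof -
        have y: "y \<in> J" using yS unfolding S_def by simp
        have nzy: "\<not> (\<tau>Q tA * \<xi>R y - \<tau>R tA * \<xi>Q y = 0 \<and> \<tau>R tA * \<xi>P y - \<tau>P tA * \<xi>R y = 0
                    \<and> \<tau>P tA * \<xi>Q y - \<tau>Q tA * \<xi>P y = 0)"
          using \<epsilon>(2) yS Nnz unfolding S_def by (auto simp: dist_commute)
        have G0: "Dx (\<lambda>t x u. g t x) tA y u1 \<noteq> 0" using gx0 tA y u1 by blast
        have cW: "(\<tau>Q tA * \<xi>R y - \<tau>R tA * \<xi>Q y) * (\<tau>1P tA + \<xi>1P y)
           + (\<tau>R tA * \<xi>P y - \<tau>P tA * \<xi>R y) * (\<tau>1Q tA + \<xi>1Q y)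
           + (\<tau>P tA * \<xi>Q y - \<tau>Q tA * \<xi>P y) * (\<tau>1R tA + \<xi>1R y) = 0"
        proof -
          have "((\<tau>Q tA * \<xi>R y - \<tau>R tA * \<xi>Q y) * (\<tau>1P tA + \<xi>1P y)
           + (\<tau>R tA * \<xi>P y - \<tau>P tA * \<xi>R y) * (\<tau>1Q tA + \<xi>1Q y)
           + (\<tau>P tA * \<xi>Q y - \<tau>Q tA * \<xi>P y) * (\<tau>1R tA + \<xi>1R y)) * Dx (\<lambda>t x u. g t x) tA y u1 = 0"
            using combine3[OF symA'_c[OF FP SP sg oJ tA y u1] symA'_c[OF FQ SQ sg oJ tA y u1]
                symA'_c[OF FR SR sg oJ tA y u1]] by simp
          then show ?thesis using G0 by simp
        qed
        have cK: "(\<tau>Q tA * \<xi>R y - \<tau>R tA * \<xi>Q y) * h1P tA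
           + (\<tau>R tA * \<xi>P y - \<tau>P tA * \<xi>R y) * h1Q tA
           + (\<tau>P tA * \<xi>Q y - \<tau>Q tA * \<xi>P y) * h1R tA
           = ((\<tau>Q tA * \<xi>R y - \<tau>R tA * \<xi>Q y) * \<tau>1P tA
           + (\<tau>R tA * \<xi>P y - \<tau>P tA * \<xi>R y) * \<tau>1Q tA
           + (\<tau>P tA * \<xi>Q y - \<tau>Q tA * \<xi>P y) * \<tau>1R tA) * g tA y"
          using combine3[OF symA_c[OF FP SP tA y u1] symA_c[OF FQ SQ tA y u1] symA_c[OF FR SR tA y u1]]
          by simp
        have cWu: "(\<tau>Q tA * \<xi>R y - \<tau>R tA * \<xi>Q y) * (hP tA * u + rP tA y)
           + (\<tau>R tA * \<xi>P y - \<tau>P tA * \<xi>R y) * (hQ tA * u + rQ tA y)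
           + (\<tau>P tA * \<xi>Q y - \<tau>Q tA * \<xi>P y) * (hR tA * u + rR tA y) = 0" if u: "u \<in> U" for u
        proof -
          have F0: "Du (Du f) tA y u \<noteq> 0" using fuu0 tA y u by blast
          have "((\<tau>Q tA * \<xi>R y - \<tau>R tA * \<xi>Q y) * (hP tA * u + rP tA y)
           + (\<tau>R tA * \<xi>P y - \<tau>P tA * \<xi>R y) * (hQ tA * u + rQ tA y)
           + (\<tau>P tA * \<xi>Q y - \<tau>Q tA * \<xi>P y) * (hR tA * u + rR tA y)) * Du (Du f) tA y u
           = (\<tau>Q tA * \<xi>R y - \<tau>R tA * \<xi>Q y) * (-(\<tau>1P tA + \<xi>1P y) * Du f tA y u)
           + (\<tau>R tA * \<xi>P y - \<tau>P tA * \<xi>R y) * (-(\<tau>1Q tA + \<xi>1Q y) * Du f tA y u)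
           + (\<tau>P tA * \<xi>Q y - \<tau>Q tA * \<xi>P y) * (-(\<tau>1R tA + \<xi>1R y) * Du f tA y u)"
            by (rule combine3[OF symCu[OF FP SP sf oU tA y u] symCu[OF FQ SQ sf oU tA y u]
                symCu[OF FR SR sf oU tA y u]])
          also have "\<dots> = - (((\<tau>Q tA * \<xi>R y - \<tau>R tA * \<xi>Q y) * (\<tau>1P tA + \<xi>1P y)
           + (\<tau>R tA * \<xi>P y - \<tau>P tA * \<xi>R y) * (\<tau>1Q tA + \<xi>1Q y)
           + (\<tau>P tA * \<xi>Q y - \<tau>Q tA * \<xi>P y) * (\<tau>1R tA + \<xi>1R y)) * Du f tA y u)"
            by (simp add: algebra_simps)
          also have "\<dots> = 0" using cW by simp
          finally show ?thesis using F0 by simp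
        qed
        have cH: "(\<tau>Q tA * \<xi>R y - \<tau>R tA * \<xi>Q y) * hP tA
           + (\<tau>R tA * \<xi>P y - \<tau>P tA * \<xi>R y) * hQ tA
           + (\<tau>P tA * \<xi>Q y - \<tau>Q tA * \<xi>P y) * hR tA = 0"
        proof -
          have "((\<tau>Q tA * \<xi>R y - \<tau>R tA * \<xi>Q y) * hP tA
           + (\<tau>R tA * \<xi>P y - \<tau>P tA * \<xi>R y) * hQ tA
           + (\<tau>P tA * \<xi>Q y - \<tau>Q tA * \<xi>P y) * hR tA) * (u1 - u2) = 0"
            using cWu[OF u1] cWu[OF u2] by (simp add: algebra_simps)
          then show ?thesis using u12 by simp
        qed
        show ?thesis
          using keyA[of "\<tau>P tA" "\<tau>1Q tA" "\<tau>Q tA" "\<tau>1P tA" "\<tau>1R tA" "\<tau>R tA"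
              "\<xi>P y" "\<xi>1Q y" "\<xi>Q y" "\<xi>1P y" "\<xi>1R y" "\<xi>R y" "h1Q tA" "h1P tA" "hP tA" "h1R tA" "hR tA" "hQ tA"
              "g tA y"] tb[OF tA] xb[OF y] hb[OF tA] nzy cH cW cK
          by (simp add: algebra_simps)
      qed
      have Tnz: "\<not> (\<tau>P tA = 0 \<and> \<tau>Q tA = 0 \<and> \<tau>R tA = 0)" using nzA by auto
      have gconst: "\<forall>y\<in>S. g tA y = g tA xA"
      proof
        fix y assume yS: "y \<in> S"
        show "g tA y = g tA xA" using key[OF yS] key[OF xAS] Tnz by auto
      qed
      have dg: "((\<lambda>y. g tA y) has_real_derivative Dx (\<lambda>t x u. g t x) tA xA u1) (at xA)"
        using smooth3_D0(2)[OF sg tA xA u1] by simp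
      have "Dx (\<lambda>t x u. g t x) tA xA u1 = 0" by (rule deriv_zero_const[OF dg oS xAS gconst])
      then show False using gx0 tA xA u1 by blast
    next
      case False
      then have C0: "\<forall>t\<in>I. \<forall>x\<in>J. \<tau>Q t * \<xi>R x - \<tau>R t * \<xi>Q x = 0 \<and> \<tau>R t * \<xi>P x - \<tau>P t * \<xi>R x = 0
                    \<and> \<tau>P t * \<xi>Q x - \<tau>Q t * \<xi>P x = 0" by blast
      show False
      proof (cases "\<exists>x\<in>J. \<not> (\<xi>P x = 0 \<and> \<xi>Q x = 0 \<and> \<xi>R x = 0)")
        case True
        then obtain xB where xB: "xB \<in> J" and nzB: "\<not> (\<xi>P xB = 0 \<and> \<xi>Q xB = 0 \<and> \<xi>R xB = 0)" by blast
        have d1: "\<tau>1P t * \<xi>Q xB - \<tau>1Q t * \<xi>P xB = 0 \<and> \<tau>1P t * \<xi>R xB - \<tau>1R t * \<xi>P xB = 0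
             \<and> \<tau>1Q t * \<xi>R xB - \<tau>1R t * \<xi>Q xB = 0" if t: "t \<in> I" for t
        proof (intro conjI)
          show "\<tau>1P t * \<xi>Q xB - \<tau>1Q t * \<xi>P xB = 0"
            by (rule zero_deriv_on[OF oI t, of "\<lambda>s. \<tau>P s * \<xi>Q xB - \<tau>Q s * \<xi>P xB"])
              (use C0 xB FF_der(1)[OF FP t] FF_der(1)[OF FQ t] in \<open>auto intro!: derivative_eq_intros simp: algebra_simps\<close>)
          show "\<tau>1P t * \<xi>R xB - \<tau>1R t * \<xi>P xB = 0"
            by (rule zero_deriv_on[OF oI t, of "\<lambda>s. \<tau>P s * \<xi>R xB - \<tau>R s * \<xi>P xB"])
              (use C0 xB FF_der(1)[OF FP t] FF_der(1)[OF FR t] in \<open>auto intro!: derivative_eq_intros simp: algebra_simps\<close>)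
          show "\<tau>1Q t * \<xi>R xB - \<tau>1R t * \<xi>Q xB = 0"
            by (rule zero_deriv_on[OF oI t, of "\<lambda>s. \<tau>Q s * \<xi>R xB - \<tau>R s * \<xi>Q xB"])
              (use C0 xB FF_der(1)[OF FQ t] FF_der(1)[OF FR t] in \<open>auto intro!: derivative_eq_intros simp: algebra_simps\<close>)
        qed
        have T0: "\<tau>P t = 0 \<and> \<tau>Q t = 0 \<and> \<tau>R t = 0" if t: "t \<in> I" for t
        proof -
          have "\<tau>P t*\<tau>1Q t - \<tau>Q t*\<tau>1P t = 0 \<and> \<tau>Q t*\<tau>1R t - \<tau>R t*\<tau>1Q t = 0 \<and> \<tau>P t*\<tau>1R t - \<tau>R t*\<tau>1P t = 0"
            using par_alg[of "\<tau>P t" "\<xi>Q xB" "\<tau>Q t" "\<xi>P xB" "\<xi>R xB" "\<tau>R t" "\<tau>1P t" "\<tau>1Q t" "\<tau>1R t"]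
              C0[rule_format, OF t xB] d1[OF t] nzB by (simp add: algebra_simps)
          then show ?thesis using tb[OF t] by simp
        qed
        have T1: "\<tau>1P t = 0 \<and> \<tau>1Q t = 0 \<and> \<tau>1R t = 0" if t: "t \<in> I" for t
          using zero_deriv_on[OF oI t FF_der(1)[OF FP t]] zero_deriv_on[OF oI t FF_der(1)[OF FQ t]]
            zero_deriv_on[OF oI t FF_der(1)[OF FR t]] T0 by blast
        have H0: "hP t = 0 \<and> hQ t = 0 \<and> hR t = 0" if t: "t \<in> I" for t
          using hb[OF t] T0[OF t] by simp
        have H1: "h1P t = 0 \<and> h1Q t = 0 \<and> h1R t = 0" if t: "t \<in> I" for t
          using zero_deriv_on[OF oI t FF_der(3)[OF FP t]] zero_deriv_on[OF oI t FF_der(3)[OF FQ t]]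
            zero_deriv_on[OF oI t FF_der(3)[OF FR t]] H0 by blast
        have G0: "Dx (\<lambda>t x u. g t x) t0 xB u1 \<noteq> 0" using gx0 t0 xB u1 by blast
        have "\<xi>P xB * Dx (\<lambda>t x u. g t x) t0 xB u1 = 0" "\<xi>Q xB * Dx (\<lambda>t x u. g t x) t0 xB u1 = 0"
          "\<xi>R xB * Dx (\<lambda>t x u. g t x) t0 xB u1 = 0"
          using symA_c[OF FP SP t0 xB u1] symA_c[OF FQ SQ t0 xB u1] symA_c[OF FR SR t0 xB u1]
            T0[OF t0] T1[OF t0] H1[OF t0] by simp_all
        then show False using G0 nzB by simp
      next
        case False
        then have X0: "\<forall>x\<in>J. \<xi>P x = 0 \<and> \<xi>Q x = 0 \<and> \<xi>R x = 0" by blast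
        have X1: "\<xi>1P x = 0 \<and> \<xi>1Q x = 0 \<and> \<xi>1R x = 0" if x: "x \<in> J" for x
          using zero_deriv_on[OF oJ x FF_der(2)[OF FP x]] zero_deriv_on[OF oJ x FF_der(2)[OF FQ x]]
            zero_deriv_on[OF oJ x FF_der(2)[OF FR x]] X0 by blast
        have T0: "\<tau>P t = 0 \<and> \<tau>Q t = 0 \<and> \<tau>R t = 0" if t: "t \<in> I" for t
        proof -
          define G where "G = Dx (\<lambda>t x u. g t x) t x0 u1"
          define Gt where "Gt = Dx (Dt (\<lambda>t x u. g t x)) t x0 u1"
          have G0: "G \<noteq> 0" unfolding G_def using gx0 t x0 u1 by blast
          have aP: "\<tau>1P t * G = - (\<tau>P t * Gt)" and aQ: "\<tau>1Q t * G = - (\<tau>Q t * Gt)"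
            and aR: "\<tau>1R t * G = - (\<tau>R t * Gt)"
            using symA'_c[OF FP SP sg oJ t x0 u1] symA'_c[OF FQ SQ sg oJ t x0 u1]
              symA'_c[OF FR SR sg oJ t x0 u1] X0 X1[OF x0] x0 unfolding G_def Gt_def
            by (simp_all add: algebra_simps)
          have "(\<tau>P t*\<tau>1Q t - \<tau>Q t*\<tau>1P t) * G = \<tau>P t*(\<tau>1Q t * G) - \<tau>Q t*(\<tau>1P t * G)"
            "(\<tau>Q t*\<tau>1R t - \<tau>R t*\<tau>1Q t) * G = \<tau>Q t*(\<tau>1R t * G) - \<tau>R t*(\<tau>1Q t * G)"
            "(\<tau>P t*\<tau>1R t - \<tau>R t*\<tau>1P t) * G = \<tau>P t*(\<tau>1R t * G) - \<tau>R t*(\<tau>1P t * G)"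
            by (simp_all add: algebra_simps)
          then have "(\<tau>P t*\<tau>1Q t - \<tau>Q t*\<tau>1P t) * G = 0" "(\<tau>Q t*\<tau>1R t - \<tau>R t*\<tau>1Q t) * G = 0"
            "(\<tau>P t*\<tau>1R t - \<tau>R t*\<tau>1P t) * G = 0"
            unfolding aP aQ aR by (simp_all add: algebra_simps)
          then show ?thesis using G0 tb[OF t] by simp
        qed
        show False using zT T0 X0 by blast
      qed
    qed
  qed
qed

end
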